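(* Let $\gamma_k>0$, let $y(t)$ solve $\dot y_k=\gamma_kv_k(Q(y))$, $k\in\mathcal{N}$, and let $x(t)=Q(y(t))$. Let $x^*=(\alpha_1^*,\dots,\alpha_N^* )$ be a strict Nash equilibrium and assume each penalty function is decomposable, $h_k(x_k)=\sum_{\beta\in\mathcal{A}_k}\theta_k(x_{k\beta})$. Then for every $\varepsilon>0$ and all $x(0)$ sufficiently close to $x^*$, $$1-x_{k\alpha_k^*}(t)\le\sum_{\mu\in\mathcal{A}_k\setminus\{\alpha_k^*\}}\phi_k\big(c_{k\mu}-(1-\varepsilon)\gamma_k\delta_{k\mu}t\big)\quad\text{for all }t\ge0,$$ where $c_{k\mu}$ are constants depending only on the initial conditions, $\delta_{k\mu}=v_{k\alpha_k^*}(x^* )-v_{k\mu}(x^* )$, and $\phi_k(z)=0$ if $z\le\theta_k'(0^+)$, $\phi_k(z)=1$ if $z\ge\theta_k'(1^-)$, $\phi_k(z)=(\theta_k')^{-1}(z)$ otherwise. In particular, if $\theta_k'(0)$ is finite, convergence occurs in finite time.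
   Context: Setting: finite game with players $\mathcal{N}$, action sets $\mathcal{A}_k$, mixed strategies $\mathcal{X}_k=\Delta(\mathcal{A}_k)$, $\mathcal{X}=\prod_k\mathcal{X}_k$, multilinear expected payoffs $u_k$, payoff vectors $v_k(x)=(u_k(\alpha;x_{-k}))_{\alpha\in\mathcal{A}_k}$. Kernels $\theta_k:[0,1]\to\mathbb{R}$ are continuous, strongly convex and smooth on $(0,1]$; the choice map is $Q_k(y_k)=\arg\max_{x_k\in\mathcal{X}_k}\{\langle y_k,x_k\rangle-h_k(x_k)\}$, $Q=(Q_k)_k$. A strict Nash equilibrium $x^*$ satisfies $u_k(x^* )>u_k(x_k;x^*_{-k})$ for all $x_k\ne x_k^*$; it is a pure profile, identified with actions $\alpha_k^*$. *)

theory Defs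
  imports "HOL-Analysis.Analysis" "HOL-Library.FuncSet"
begin

text \<open>Finite game: players are the elements of a finite type 'n, the action set of
player k is the finite nonempty set A k of elements of type 'a.  Mixed strategies of
player k are functions 'a => real that vanish outside A k and form a probability vector
on A k.\<close>

definition mixed_simplex :: "'a set \<Rightarrow> ('a \<Rightarrow> real) set" where
  "mixed_simplex S = {p. (\<forall>b\<in>S. 0 \<le> p b) \<and> (\<forall>b. b \<notin> S \<longrightarrow> p b = 0) \<and> sum p S = 1}"

definition strategies :: "('n \<Rightarrow> 'a set) \<Rightarrow> ('n \<Rightarrow> 'a \<Rightarrow> real) set" where
  "strategies A = {x. \<forall>k. x k \<in> mixed_simplex (A k)}"

definition pure :: "'a \<Rightarrow> 'a \<Rightarrow> real" where
  "pure \<alpha> = (\<lambda>\<beta>. if \<beta> = \<alpha> then 1 else 0)"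

definition payoff ::
  "('n::finite \<Rightarrow> 'a set) \<Rightarrow> ('n \<Rightarrow> ('n \<Rightarrow> 'a) \<Rightarrow> real) \<Rightarrow> 'n \<Rightarrow> ('n \<Rightarrow> 'a \<Rightarrow> real) \<Rightarrow> real" where
  "payoff A U k x = (\<Sum>a\<in>Pi\<^sub>E UNIV A. (\<Prod>j\<in>UNIV. x j (a j)) * U k a)"

definition payv ::
  "('n::finite \<Rightarrow> 'a set) \<Rightarrow> ('n \<Rightarrow> ('n \<Rightarrow> 'a) \<Rightarrow> real) \<Rightarrow> 'n \<Rightarrow> ('n \<Rightarrow> 'a \<Rightarrow> real) \<Rightarrow> 'a \<Rightarrow> real" where
  "payv A U k x \<alpha> = payoff A U k (x(k := pure \<alpha>))"

definition strict_nash ::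
  "('n::finite \<Rightarrow> 'a set) \<Rightarrow> ('n \<Rightarrow> ('n \<Rightarrow> 'a) \<Rightarrow> real) \<Rightarrow> ('n \<Rightarrow> 'a \<Rightarrow> real) \<Rightarrow> bool" where
  "strict_nash A U xs \<longleftrightarrow> xs \<in> strategies A \<and>
     (\<forall>k. \<forall>z\<in>mixed_simplex (A k). z \<noteq> xs k \<longrightarrow> payoff A U k xs > payoff A U k (xs(k := z)))"

definition choice ::
  "('n \<Rightarrow> 'a set) \<Rightarrow> ('n \<Rightarrow> ('a \<Rightarrow> real) \<Rightarrow> real) \<Rightarrow> ('n \<Rightarrow> 'a \<Rightarrow> real) \<Rightarrow> ('n \<Rightarrow> 'a \<Rightarrow> real)" where
  "choice A h y = (\<lambda>k. THE p. p \<in> mixed_simplex (A k) \<and>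
      (\<forall>z\<in>mixed_simplex (A k). (\<Sum>b\<in>A k. y k b * z b) - h k z \<le> (\<Sum>b\<in>A k. y k b * p b) - h k p))"

definition strongly_convex_on_real :: "real set \<Rightarrow> (real \<Rightarrow> real) \<Rightarrow> bool" where
  "strongly_convex_on_real S f \<longleftrightarrow> (\<exists>K>0. \<forall>x\<in>S. \<forall>y\<in>S. \<forall>t\<in>{0..1}.
      f (t * x + (1 - t) * y) \<le> t * f x + (1 - t) * f y - K / 2 * t * (1 - t) * (x - y)^2)"

text \<open>One-sided limits theta'(0^+) and theta'(1^-) of the (increasing) derivative,
as extended reals (theta'(0^+) may be -infinity).\<close>
definition dlim0 :: "(real \<Rightarrow> real) \<Rightarrow> ereal" where
  "dlim0 d = Lim (at_right 0) (\<lambda>x. ereal (d x))"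

definition dlim1 :: "(real \<Rightarrow> real) \<Rightarrow> ereal" where
  "dlim1 d = Lim (at_left 1) (\<lambda>x. ereal (d x))"

definition phi :: "(real \<Rightarrow> real) \<Rightarrow> real \<Rightarrow> real" where
  "phi d z = (if ereal z \<le> dlim0 d then 0
              else if dlim1 d \<le> ereal z then 1
              else (THE s. s \<in> {0<..<1} \<and> d s = z))"

end

theory Submission
  imports Defs
begin



lemma closed_le0:
  fixes g :: "real \<Rightarrow> real"
  assumes "continuous_on {0..1} g" "\<And>x. x \<in> {0<..1} \<Longrightarrow> g x \<le> 0"
  shows "g 0 \<le> 0"
proof -
  have "(g \<longlongrightarrow> g 0) (at 0 within {0..1})" using assms(1) by (simp add: continuous_on_def)
  hence "(g \<longlongrightarrow> g 0) (at_right 0)" using at_within_Icc_at_right[of 0 "1::real"] by simp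
  moreover have "eventually (\<lambda>x. g x \<le> 0) (at_right 0)"
  proof -
    have E: "eventually (\<lambda>x. x \<in> {0<..<1}) (at_right (0::real))" by (rule eventually_at_right_real) simp
    show ?thesis by (rule eventually_mono[OF E]) (auto intro: assms(2))
  qed
  ultimately show ?thesis by (rule tendsto_upperbound) simp
qed

lemma conv01: "a \<in> {0..1} \<Longrightarrow> b \<in> {0..1} \<Longrightarrow> t \<in> {0..1} \<Longrightarrow> (1-t)*a+t*b \<in> {0..(1::real)}"
proof -
  assume a: "a \<in> {0..1}" and b: "b \<in> {0..1}" and t: "t \<in> {0..1}"
  have "(1-t)*a \<le> (1-t)" using a t by (simp add: mult_left_le)
  moreover have "t*b \<le> t" using b t by (simp add: mult_left_le)
  ultimately show ?thesis using a b t by auto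
qed

lemma sc_convex:
  assumes C: "continuous_on {0..1} f" and SC: "strongly_convex_on_real {0<..1} f"
  shows "convex_on {0..1} f"
proof (rule convex_on_linorderI)
  fix t x y :: real assume t: "0<t" "t<1" and x: "x \<in> {0..1}" and y: "y\<in>{0..1}" and xy: "x<y"
  obtain K where K: "K>0" "\<forall>x\<in>{0<..1}. \<forall>y\<in>{0<..1}. \<forall>t\<in>{0..1}. f (t*x + (1-t)*y) \<le> t*f x + (1-t)*f y - K/2*t*(1-t)*(x-y)^2"
    using SC unfolding strongly_convex_on_real_def by blast
  have y': "y \<in> {0<..1}" using xy x y by auto
  have main: "f ((1-t)*x' + t*y) - ((1-t)*f x' + t * f y) \<le> 0" if "x' \<in> {0<..1}" for x'
  proof -
    have "f ((1-t)*x' + (1-(1-t))*y) \<le> (1-t)*f x' + (1-(1-t))*f y - K/2*(1-t)*(1-(1-t))*(x'-y)^2"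
      using K(2)[rule_format, of x' y "1-t"] that y' t by auto
    moreover have "K/2*(1-t)*(1-(1-t))*(x'-y)^2 \<ge> 0" using K t by auto
    ultimately show ?thesis by simp
  qed
  have "f ((1-t)*x + t*y) - ((1-t)*f x + t*f y) \<le> 0"
  proof (cases "x = 0")
    case True
    have "(\<lambda>x'. f ((1-t)*x' + t*y) - ((1-t)*f x' + t*f y)) 0 \<le> 0"
    proof (rule closed_le0)
      have "continuous_on {0..1} (\<lambda>x'. f ((1-t)*x' + t*y))"
        by (rule continuous_on_compose2[OF C]) (use y t in \<open>auto intro!: continuous_intros conv01 simp: less_imp_le\<close>)
      then show "continuous_on {0..1} (\<lambda>x'. f ((1-t)*x' + t*y) - ((1-t)*f x' + t*f y))"
        by (intro continuous_intros C)
    qed (rule main)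
    then show ?thesis using True by simp
  next
    case False then show ?thesis using main x by auto
  qed
  then show "f ((1-t) *\<^sub>R x + t *\<^sub>R y) \<le> (1-t)*f x + t*f y" by simp
qed (simp add: convex_real_interval)

lemma sc_tangent:
  assumes C: "continuous_on {0..1} f" and SC: "strongly_convex_on_real {0<..1} f"
    and D: "\<And>s. s\<in>{0<..1} \<Longrightarrow> (f has_real_derivative f' s) (at s within {0<..1})"
    and c: "c \<in> {0<..<1}" and x: "x\<in>{0..1}"
  shows "f x - f c \<ge> f' c * (x - c)"
proof -
  have "(f has_real_derivative f' c) (at c within {0<..<1})" using D[of c] c
    by (auto intro: has_field_derivative_subset)
  hence "(f has_real_derivative f' c) (at c)" using at_within_open[of c "{0<..<1}"] c by simp
  hence d: "(f has_real_derivative f' c) (at c within {0..1})" by (rule has_field_derivative_at_within)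
  show ?thesis by (rule convex_on_imp_above_tangent[OF sc_convex[OF C SC] _ _ x d]) (use c in auto)
qed

lemma sc_strict_tangent:
  assumes C: "continuous_on {0..1} f" and SC: "strongly_convex_on_real {0<..1} f"
    and D: "\<And>s. s\<in>{0<..1} \<Longrightarrow> (f has_real_derivative f' s) (at s within {0<..1})"
    and c: "c \<in> {0<..<1}" and x: "x\<in>{0..1}" and xc: "x \<noteq> c"
  shows "f x - f c > f' c * (x - c)"
proof -
  obtain K where K: "K>0" "\<forall>x\<in>{0<..1}. \<forall>y\<in>{0<..1}. \<forall>t\<in>{0..1}. f (t*x + (1-t)*y) \<le> t*f x + (1-t)*f y - K/2*t*(1-t)*(x-y)^2"
    using SC unfolding strongly_convex_on_real_def by blast
  define m where "m = (c+x)/2"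
  define d where "d = (c+m)/2"
  have m: "m \<in> {0<..1}" using c x by (auto simp: m_def)
  have cm: "c \<noteq> m" using xc by (auto simp: m_def)
  have "f (1/2*c + (1-1/2)*m) \<le> 1/2*f c + (1-1/2)*f m - K/2*(1/2)*(1-1/2)*(c-m)^2"
    using K(2)[rule_format, of c m "1/2"] c m by auto
  moreover have "K/2*(1/2)*(1-1/2)*(c-m)^2 > 0" using K cm by auto
  moreover have "1/2*c + (1-1/2)*m = d" by (simp add: d_def)
  ultimately have 1: "f d < (f c + f m)/2" by simp
  have "f ((1-1/2)*c + 1/2*x) \<le> (1-1/2)*f c + 1/2*f x"
    using convex_onD[OF sc_convex[OF C SC], of "1/2" c x] c x by auto
  moreover have "(1-1/2)*c + 1/2*x = m" by (simp add: m_def)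
  ultimately have 2: "f m \<le> (f c + f x)/2" by simp
  have d01: "d \<in> {0..1}" using c m by (auto simp: d_def)
  have 3: "f d - f c \<ge> f' c * (d - c)" by (rule sc_tangent[OF C SC D c d01])
  have 4: "f' c * (d - c) = f' c * (x - c) / 4" by (simp add: d_def m_def field_simps)
  show ?thesis using 1 2 3 4 by (simp add: field_simps)
qed

lemma sc_mono:
  assumes C: "continuous_on {0..1} f" and SC: "strongly_convex_on_real {0<..1} f"
    and D: "\<And>s. s\<in>{0<..1} \<Longrightarrow> (f has_real_derivative f' s) (at s within {0<..1})"
    and a: "a \<in> {0<..<1}" and b: "b \<in> {0<..<1}" and ab: "a < b"
  shows "f' a < f' b"
proof -
  have 1: "f b - f a > f' a * (b - a)" using sc_strict_tangent[OF C SC D a, of b] b ab by auto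
  have 2: "f a - f b > f' b * (a - b)" using sc_strict_tangent[OF C SC D b, of a] a ab by auto
  have "(f' b - f' a) * (b - a) > 0" using 1 2 by (simp add: algebra_simps)
  then show ?thesis using ab by (simp add: zero_less_mult_iff)
qed

lemma sc_le1:
  assumes C: "continuous_on {0..1} f" and SC: "strongly_convex_on_real {0<..1} f"
    and D: "\<And>s. s\<in>{0<..1} \<Longrightarrow> (f has_real_derivative f' s) (at s within {0<..1})"
    and DC: "continuous_on {0<..1} f'"
    and a: "a \<in> {0<..1}"
  shows "f' a \<le> f' 1"
proof (cases "a = 1")
  case False
  with a have a': "a \<in> {0<..<1}" by auto
  have "(f' \<longlongrightarrow> f' 1) (at 1 within {0<..1})" using DC by (simp add: continuous_on_def)
  hence "(f' \<longlongrightarrow> f' 1) (at 1 within {a..1})" by (rule tendsto_within_subset) (use a in auto)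
  hence "(f' \<longlongrightarrow> f' 1) (at_left 1)" using at_within_Icc_at_left[of a 1] a' by simp
  moreover have "eventually (\<lambda>x. f' a \<le> f' x) (at_left 1)"
  proof -
    have E: "eventually (\<lambda>x. x \<in> {a<..<1}) (at_left (1::real))" by (rule eventually_at_left_real) (use a' in simp)
    show ?thesis by (rule eventually_mono[OF E]) (use sc_mono[OF C SC D a'] a' in \<open>auto intro: less_imp_le\<close>)
  qed
  ultimately show ?thesis by (rule tendsto_lowerbound) simp
qed simp




locale kern =
  fixes f f' :: "real \<Rightarrow> real"
  assumes C: "continuous_on {0..1} f" and SC: "strongly_convex_on_real {0<..1} f"
    and D: "\<And>s. s\<in>{0<..1} \<Longrightarrow> (f has_real_derivative f' s) (at s within {0<..1})"
    and DC: "continuous_on {0<..1} f'"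
begin

lemma tangent: "c \<in> {0<..<1} \<Longrightarrow> x \<in> {0..1} \<Longrightarrow> f x - f c \<ge> f' c * (x - c)"
  by (rule sc_tangent[OF C SC D])

lemma smono: assumes "a \<in> {0<..1}" "b \<in> {0<..1}" "a < b" shows "f' a < f' b"
proof (cases "b = 1")
  case True
  define b' where "b' = (a+1)/2"
  have "f' a < f' b'" using assms True by (intro sc_mono[OF C SC D]) (auto simp: b'_def)
  also have "f' b' \<le> f' 1" using assms True by (intro sc_le1[OF C SC D DC]) (auto simp: b'_def)
  finally show ?thesis using True by simp
next
  case False
  then show ?thesis using assms by (intro sc_mono[OF C SC D]) auto
qed

lemma mono: assumes "a \<in> {0<..1}" "b \<in> {0<..1}" "a \<le> b" shows "f' a \<le> f' b"
  using smono[OF assms(1,2)] assms(3) by (cases "a = b") auto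

definition L0 :: ereal where "L0 = (INF r\<in>{0<..1}. ereal (f' r))"

lemma L0_le: "r \<in> {0<..1} \<Longrightarrow> L0 \<le> ereal (f' r)"
  unfolding L0_def by (rule INF_lower)

lemma L0_tendsto: "((\<lambda>x. ereal (f' x)) \<longlongrightarrow> L0) (at_right 0)"
proof (rule order_tendstoI)
  fix a assume a: "a < L0"
  have E: "eventually (\<lambda>x. x \<in> {0<..<1}) (at_right (0::real))" by (rule eventually_at_right_real) simp
  show "eventually (\<lambda>x. a < ereal (f' x)) (at_right 0)"
    by (rule eventually_mono[OF E]) (use a L0_le in \<open>force\<close>)
next
  fix a assume a: "L0 < a"
  then obtain r where r: "r \<in> {0<..1}" "ereal (f' r) < a" unfolding L0_def by (auto simp: INF_less_iff)
  have E: "eventually (\<lambda>x. x \<in> {0<..<r}) (at_right (0::real))" by (rule eventually_at_right_real) (use r in simp)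
  show "eventually (\<lambda>x. ereal (f' x) < a) (at_right 0)"
  proof (rule eventually_mono[OF E])
    fix x assume x: "x \<in> {0<..<r}"
    then have "f' x \<le> f' r" using r by (intro mono) auto
    then show "ereal (f' x) < a" using r(2) by (meson ereal_less_eq(3) order_le_less_trans)
  qed
qed

lemma dlim0_eq: "dlim0 f' = L0"
  unfolding dlim0_def by (rule tendsto_Lim[OF trivial_limit_at_right_real L0_tendsto])

lemma dlim1_eq: "dlim1 f' = ereal (f' 1)"
proof -
  have "(f' \<longlongrightarrow> f' 1) (at 1 within {0<..1})" using DC by (simp add: continuous_on_def)
  hence "(f' \<longlongrightarrow> f' 1) (at 1 within {1/2..1})" by (rule tendsto_within_subset) auto
  hence "(f' \<longlongrightarrow> f' 1) (at_left 1)" using at_within_Icc_at_left[of "1/2" "1::real"] by simp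
  hence "((\<lambda>x. ereal (f' x)) \<longlongrightarrow> ereal (f' 1)) (at_left 1)" by (simp add: lim_ereal)
  then show ?thesis unfolding dlim1_def by (rule tendsto_Lim[OF trivial_limit_at_left_real])
qed

lemma phi_exists:
  assumes z0: "dlim0 f' < ereal z" and z1: "ereal z < dlim1 f'"
  shows "\<exists>s\<in>{0<..<1}. f' s = z"
proof -
  obtain r where r: "r \<in> {0<..1}" "ereal (f' r) < ereal z" using z0 unfolding dlim0_eq L0_def
    by (auto simp: INF_less_iff)
  have z1': "z < f' 1" using z1 dlim1_eq by simp
  have "continuous_on {r..1} f'" by (rule continuous_on_subset[OF DC]) (use r in auto)
  then obtain s where s: "r \<le> s" "s \<le> 1" "f' s = z" using IVT'[of f' r z 1] r z1' by auto
  have "s \<noteq> 1" using s z1' by auto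
  then show ?thesis using s r by auto
qed

lemma phi_val:
  assumes z0: "\<not> ereal z \<le> dlim0 f'" and z1: "\<not> dlim1 f' \<le> ereal z"
  shows "phi f' z \<in> {0<..<1} \<and> f' (phi f' z) = z"
proof -
  have "\<exists>s\<in>{0<..<1}. f' s = z" using z0 z1 by (intro phi_exists) (auto simp: not_le)
  then obtain s where s: "s \<in> {0<..<1}" "f' s = z" by blast
  have uniq: "\<exists>!s. s \<in> {0<..<1} \<and> f' s = z"
  proof (rule ex1I[of _ s])
    fix t assume t: "t \<in> {0<..<1} \<and> f' t = z"
    show "t = s"
    proof (rule ccontr)
      assume "t \<noteq> s"
      then have "t < s \<or> s < t" by auto
      then show False using smono[of t s] smono[of s t] s t by auto
    qed
  qed (use s in auto)
  have "phi f' z = (THE s. s \<in> {0<..<1} \<and> f' s = z)" using z0 z1 by (simp add: phi_def)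
  then show ?thesis using theI'[OF uniq] by simp
qed

lemma phi_nonneg: "0 \<le> phi f' z"
  using phi_val[of z] by (auto simp: phi_def)

lemma phi_bound:
  assumes q: "q \<in> {0<..<1}" and hz: "\<And>r. r \<in> {0<..<q} \<Longrightarrow> f' r \<le> z"
  shows "q \<le> phi f' z"
proof (cases "ereal z \<le> dlim0 f'")
  case True
  have "L0 \<le> ereal (f' (q/4))" using q by (intro L0_le) auto
  with True have "ereal z \<le> ereal (f' (q/4))" unfolding dlim0_eq by (rule order_trans)
  then have "z \<le> f' (q/4)" by simp
  moreover have "f' (q/4) < f' (q/2)" using q by (intro smono) auto
  moreover have "f' (q/2) \<le> z" using q by (intro hz) auto
  ultimately show ?thesis by simp
next
  case False
  note F = False
  show ?thesis
  proof (cases "dlim1 f' \<le> ereal z")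
    case True then show ?thesis using q F by (simp add: phi_def)
  next
    case False
    have s: "phi f' z \<in> {0<..<1}" "f' (phi f' z) = z" using phi_val F False by auto
    show ?thesis
    proof (rule ccontr)
      assume "\<not> q \<le> phi f' z"
      then have lt: "phi f' z < q" by simp
      define r where "r = (phi f' z + q)/2"
      have "f' r \<le> z" using lt s by (intro hz) (auto simp: r_def)
      moreover have "f' (phi f' z) < f' r" using lt s q by (intro smono) (auto simp: r_def)
      ultimately show False using s by simp
    qed
  qed
qed

lemma phi_zero: assumes "dlim0 f' \<noteq> -\<infinity>" shows "\<exists>z0. \<forall>z\<le>z0. phi f' z = 0"
proof (cases "dlim0 f'")
  case (real r)
  then show ?thesis by (intro exI[of _ r]) (auto simp: phi_def)
next
  case PInf
  then show ?thesis by (auto simp: phi_def)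
qed (use assms in auto)

end



lemma simplex_01: "p \<in> mixed_simplex A \<Longrightarrow> finite A \<Longrightarrow> b \<in> A \<Longrightarrow> 0 \<le> p b \<and> p b \<le> 1"
proof -
  assume p: "p \<in> mixed_simplex A" and A: "finite A" and b: "b \<in> A"
  have "p b \<le> sum p A" using p A b by (intro member_le_sum) (auto simp: mixed_simplex_def)
  then show ?thesis using p b by (auto simp: mixed_simplex_def)
qed

lemma sum2: "finite A \<Longrightarrow> \<beta>\<in>A \<Longrightarrow> \<gamma>\<in>A \<Longrightarrow> \<beta>\<noteq>\<gamma> \<Longrightarrow> sum g A = g \<beta> + g \<gamma> + sum g (A - {\<beta>,\<gamma>})"
proof -
  assume A: "finite A" "\<beta>\<in>A" "\<gamma>\<in>A" "\<beta>\<noteq>\<gamma>"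
  have "sum g A = g \<beta> + sum g (A - {\<beta>})" using A by (simp add: sum.remove)
  also have "sum g (A - {\<beta>}) = g \<gamma> + sum g (A - {\<beta>} - {\<gamma>})" using A by (intro sum.remove) auto
  also have "A - {\<beta>} - {\<gamma>} = A - {\<beta>,\<gamma>}" by auto
  finally show ?thesis by (simp add: add.assoc)
qed

lemma pure_simplex: "\<alpha> \<in> A \<Longrightarrow> finite A \<Longrightarrow> pure \<alpha> \<in> mixed_simplex A"
  by (auto simp: mixed_simplex_def pure_def)

definition J :: "'a set \<Rightarrow> (real \<Rightarrow> real) \<Rightarrow> ('a \<Rightarrow> real) \<Rightarrow> ('a \<Rightarrow> real) \<Rightarrow> real" where
  "J A f y p = (\<Sum>b\<in>A. y b * p b) - (\<Sum>b\<in>A. f (p b))"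

definition ismax where
  "ismax A f y p \<longleftrightarrow> p \<in> mixed_simplex A \<and> (\<forall>q\<in>mixed_simplex A. J A f y q \<le> J A f y p)"

lemma compact_simplex:
  assumes "finite A" shows "compact (mixed_simplex A)"
proof -
  define B where "B = (\<lambda>b::'a. if b \<in> A then {0..1::real} else {0})"
  have "compactin (product_topology (\<lambda>_. euclidean) UNIV) (PiE UNIV B)"
    by (simp add: compactin_PiE B_def)
  hence c1: "compact (PiE UNIV B)" by (simp add: euclidean_product_topology)
  have c2: "closed {p::'a\<Rightarrow>real. sum p A = 1}"
    by (intro closed_Collect_eq continuous_intros continuous_on_product_coordinates)
  have "mixed_simplex A = PiE UNIV B \<inter> {p. sum p A = 1}"
  proof (intro equalityI subsetI)
    fix p assume p: "p \<in> mixed_simplex A"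
    then show "p \<in> PiE UNIV B \<inter> {p. sum p A = 1}"
      using simplex_01[OF p assms] by (auto simp: B_def mixed_simplex_def)
  next
    fix p assume "p \<in> PiE UNIV B \<inter> {p. sum p A = 1}"
    then show "p \<in> mixed_simplex A" by (auto simp: B_def mixed_simplex_def PiE_iff split: if_splits)
  qed
  then show ?thesis using c1 c2 by auto
qed

context kern begin

lemma max_exists:
  assumes A: "finite A" "A \<noteq> {}"
  shows "\<exists>p. ismax A f y p"
proof -
  obtain \<alpha> where \<alpha>: "\<alpha> \<in> A" using A by auto
  have ne: "mixed_simplex A \<noteq> {}" using pure_simplex[OF \<alpha> A(1)] by auto
  have cf: "continuous_on (mixed_simplex A) (\<lambda>p. f (p b))" if "b \<in> A" for b
    by (rule continuous_on_compose2[OF C, of _ "\<lambda>p. p b"])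
       (use simplex_01[OF _ A(1) that] in \<open>auto intro!: continuous_on_product_then_coordinatewise continuous_on_id\<close>)
  have "continuous_on (mixed_simplex A) (J A f y)"
    unfolding J_def
    by (intro continuous_intros cf continuous_on_product_then_coordinatewise continuous_on_id) auto
  then obtain p where "p \<in> mixed_simplex A" "\<forall>q\<in>mixed_simplex A. J A f y q \<le> J A f y p"
    using continuous_attains_sup[OF compact_simplex[OF A(1)] ne] by blast
  then show ?thesis unfolding ismax_def by blast
qed

lemma strict_mid:
  assumes a: "a \<in> {0..1}" and c: "c \<in> {0..1}" and ac: "a \<noteq> c"
  shows "f ((a+c)/2) < (f a + f c)/2"
proof -
  define m where "m = (a+c)/2"
  have m: "m \<in> {0<..<1}" using a c ac by (auto simp: m_def)
  have 1: "f a - f m > f' m * (a - m)" using a ac by (intro sc_strict_tangent[OF C SC D m]) (auto simp: m_def)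
  have 2: "f c - f m > f' m * (c - m)" using c ac by (intro sc_strict_tangent[OF C SC D m]) (auto simp: m_def)
  have "f' m * (a - m) + f' m * (c - m) = 0" by (simp add: m_def algebra_simps)
  then show ?thesis using 1 2 by (simp add: m_def[symmetric] field_simps)
qed

lemma mid_le:
  assumes a: "a \<in> {0..1}" and c: "c \<in> {0..1}"
  shows "f ((a+c)/2) \<le> (f a + f c)/2"
  using strict_mid[OF a c] by (cases "a = c") auto

lemma max_unique:
  assumes A: "finite A" and p: "ismax A f y p" and q: "ismax A f y q"
  shows "p = q"
proof (rule ccontr)
  assume pq: "p \<noteq> q"
  have ps: "p \<in> mixed_simplex A" and qs: "q \<in> mixed_simplex A" using p q by (auto simp: ismax_def)
  obtain b0 where b0: "b0 \<in> A" "p b0 \<noteq> q b0"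
  proof -
    from pq obtain b where "p b \<noteq> q b" by auto
    moreover have "b \<in> A" using calculation ps qs unfolding mixed_simplex_def by (metis (mono_tags, lifting) mem_Collect_eq)
    ultimately show ?thesis using that by blast
  qed
  define m where "m = (\<lambda>b. (p b + q b)/2)"
  have ms: "m \<in> mixed_simplex A" using ps qs
    by (auto simp: mixed_simplex_def m_def sum.distrib sum_divide_distrib[symmetric])
  have lin: "(\<Sum>b\<in>A. y b * m b) = ((\<Sum>b\<in>A. y b * p b) + (\<Sum>b\<in>A. y b * q b))/2"
    by (simp add: m_def sum.distrib[symmetric] sum_divide_distrib[symmetric] algebra_simps)
  have "(\<Sum>b\<in>A. f (m b)) < (\<Sum>b\<in>A. (f (p b) + f (q b))/2)"
  proof (rule sum_strict_mono_ex1[OF A])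
    show "\<forall>x\<in>A. f (m x) \<le> (f (p x) + f (q x)) / 2"
      using simplex_01[OF ps A] simplex_01[OF qs A] unfolding m_def by (intro ballI mid_le) auto
    show "\<exists>a\<in>A. f (m a) < (f (p a) + f (q a)) / 2"
      using simplex_01[OF ps A b0(1)] simplex_01[OF qs A b0(1)] b0
      unfolding m_def by (intro bexI[of _ b0] strict_mid) auto
  qed
  also have "\<dots> = ((\<Sum>b\<in>A. f (p b)) + (\<Sum>b\<in>A. f (q b)))/2"
    by (simp add: sum.distrib[symmetric] sum_divide_distrib[symmetric])
  finally have "J A f y m > (J A f y p + J A f y q)/2" unfolding J_def lin by (simp add: field_simps)
  moreover have "J A f y q \<le> J A f y p" "J A f y p \<le> J A f y q" "J A f y m \<le> J A f y p"
    using p q ps qs ms by (auto simp: ismax_def)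
  ultimately show False by (simp add: field_simps)
qed

lemma ismax_the:
  assumes A: "finite A" "A \<noteq> {}"
  shows "ismax A f y (THE p. ismax A f y p)"
proof -
  obtain p where p: "ismax A f y p" using max_exists[OF A] by blast
  have "\<exists>!p. ismax A f y p" using p max_unique[OF A(1)] by blast
  then show ?thesis by (rule theI')
qed

lemma MEI:
  assumes A: "finite A" and p: "ismax A f y p" and \<beta>: "\<beta> \<in> A" and \<gamma>: "\<gamma> \<in> A" and bg: "\<beta> \<noteq> \<gamma>"
    and s: "0 < s" "s < p \<beta>"
  shows "y \<gamma> - y \<beta> \<le> f' (p \<gamma> + s) - f' (p \<beta> - s)"
proof -
  have ps: "p \<in> mixed_simplex A" using p by (simp add: ismax_def)
  have nn: "\<forall>b\<in>A. 0 \<le> p b" using ps by (simp add: mixed_simplex_def)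
  have sum1: "sum p A = 1" using ps by (simp add: mixed_simplex_def)
  have "sum p (A - {\<beta>,\<gamma>}) \<ge> 0" using nn by (intro sum_nonneg) auto
  hence bg1: "p \<beta> + p \<gamma> \<le> 1" using sum2[OF A \<beta> \<gamma> bg, of p] sum1 by simp
  have pg: "0 \<le> p \<gamma>" using nn \<gamma> by auto
  define p' where "p' = p(\<beta> := p \<beta> - s, \<gamma> := p \<gamma> + s)"
  have p'b: "p' \<beta> = p \<beta> - s" and p'g: "p' \<gamma> = p \<gamma> + s" using bg by (auto simp: p'_def)
  have p'o: "\<And>b. b \<noteq> \<beta> \<Longrightarrow> b \<noteq> \<gamma> \<Longrightarrow> p' b = p b" by (auto simp: p'_def)
  have rest: "sum g (A - {\<beta>,\<gamma>}) = sum g' (A - {\<beta>,\<gamma>})"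
    if "\<And>b. b \<noteq> \<beta> \<Longrightarrow> b \<noteq> \<gamma> \<Longrightarrow> g b = g' b" for g g' :: "'a \<Rightarrow> real"
    using that by (intro sum.cong) auto
  have "sum p' A = sum p A"
    using sum2[OF A \<beta> \<gamma> bg, of p'] sum2[OF A \<beta> \<gamma> bg, of p] rest[of p' p] p'o p'b p'g by simp
  hence p's: "p' \<in> mixed_simplex A" using ps s pg \<beta> \<gamma>
    by (auto simp: mixed_simplex_def p'_def)
  have "J A f y p' \<le> J A f y p" using p p's by (simp add: ismax_def)
  moreover have "J A f y p' = (y \<beta> * (p \<beta> - s) + y \<gamma> * (p \<gamma> + s) + (\<Sum>b\<in>A - {\<beta>,\<gamma>}. y b * p b))
       - (f (p \<beta> - s) + f (p \<gamma> + s) + (\<Sum>b\<in>A - {\<beta>,\<gamma>}. f (p b)))"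
    unfolding J_def
    using sum2[OF A \<beta> \<gamma> bg, of "\<lambda>b. y b * p' b"] sum2[OF A \<beta> \<gamma> bg, of "\<lambda>b. f (p' b)"]
      rest[of "\<lambda>b. y b * p' b" "\<lambda>b. y b * p b"] rest[of "\<lambda>b. f (p' b)" "\<lambda>b. f (p b)"] p'o p'b p'g
    by simp
  moreover have "J A f y p = (y \<beta> * p \<beta> + y \<gamma> * p \<gamma> + (\<Sum>b\<in>A - {\<beta>,\<gamma>}. y b * p b))
       - (f (p \<beta>) + f (p \<gamma>) + (\<Sum>b\<in>A - {\<beta>,\<gamma>}. f (p b)))"
    unfolding J_def
    using sum2[OF A \<beta> \<gamma> bg, of "\<lambda>b. y b * p b"] sum2[OF A \<beta> \<gamma> bg, of "\<lambda>b. f (p b)"] by simp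
  ultimately have key: "s * (y \<gamma> - y \<beta>) \<le> (f (p \<gamma> + s) - f (p \<gamma>)) + (f (p \<beta> - s) - f (p \<beta>))"
    by (simp add: algebra_simps)
  have c1: "p \<gamma> + s \<in> {0<..<1}" using s pg bg1 by auto
  have c2: "p \<beta> - s \<in> {0<..<1}" using s bg1 pg by auto
  have t1: "f (p \<gamma>) - f (p \<gamma> + s) \<ge> f' (p \<gamma> + s) * (p \<gamma> - (p \<gamma> + s))"
    using bg1 pg s by (intro tangent[OF c1]) auto
  have t2: "f (p \<beta>) - f (p \<beta> - s) \<ge> f' (p \<beta> - s) * (p \<beta> - (p \<beta> - s))"
    using bg1 pg s by (intro tangent[OF c2]) auto
  have "s * (y \<gamma> - y \<beta>) \<le> s * (f' (p \<gamma> + s) - f' (p \<beta> - s))"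
    using key t1 t2 by (simp add: algebra_simps)
  then show ?thesis using s by simp
qed

end



context kern begin

lemma MON:
  assumes A: "finite A" and p: "ismax A f y p" and q: "ismax A f y' q" and \<alpha>: "\<alpha> \<in> A"
    and pa: "0 < p \<alpha>" and hy: "\<forall>\<mu>\<in>A-{\<alpha>}. y' \<mu> - y' \<alpha> \<le> y \<mu> - y \<alpha>"
  shows "p \<alpha> \<le> q \<alpha>"
proof (rule ccontr)
  assume "\<not> p \<alpha> \<le> q \<alpha>"
  hence lt: "q \<alpha> < p \<alpha>" by simp
  have ps: "p \<in> mixed_simplex A" and qs: "q \<in> mixed_simplex A" using p q by (auto simp: ismax_def)
  have "sum p A = p \<alpha> + sum p (A - {\<alpha>})" "sum q A = q \<alpha> + sum q (A - {\<alpha>})"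
    using A \<alpha> by (auto simp: sum.remove)
  hence "sum p (A - {\<alpha>}) < sum q (A - {\<alpha>})" using ps qs lt by (auto simp: mixed_simplex_def)
  then obtain \<mu> where \<mu>: "\<mu> \<in> A - {\<alpha>}" "p \<mu> < q \<mu>"
    by (metis not_le sum_mono)
  have nn: "0 \<le> q \<alpha>" "0 \<le> p \<mu>" using simplex_01[OF ps A] simplex_01[OF qs A] \<alpha> \<mu> by auto
  define s where "s = min (p \<alpha> - q \<alpha>) (q \<mu> - p \<mu>) / 3"
  have s: "0 < s" "2 * s < p \<alpha> - q \<alpha>" "2 * s < q \<mu> - p \<mu>" using lt \<mu> unfolding s_def by (auto simp: min_def)
  have 1: "y' \<alpha> - y' \<mu> \<le> f' (q \<alpha> + s) - f' (q \<mu> - s)"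
    using \<mu> \<alpha> s nn by (intro MEI[OF A q]) auto
  have 2: "y \<mu> - y \<alpha> \<le> f' (p \<mu> + s) - f' (p \<alpha> - s)"
    using \<mu> \<alpha> s nn by (intro MEI[OF A p]) auto
  have le1: "p \<alpha> \<le> 1" "q \<mu> \<le> 1" using simplex_01[OF ps A] simplex_01[OF qs A] \<alpha> \<mu> by auto
  have 3: "f' (q \<alpha> + s) < f' (p \<alpha> - s)" using s nn le1 by (intro smono) auto
  have 4: "f' (p \<mu> + s) < f' (q \<mu> - s)" using s nn le1 by (intro smono) auto
  have "y' \<mu> - y' \<alpha> \<le> y \<mu> - y \<alpha>" using hy \<mu> by auto
  then show False using 1 2 3 4 by linarith
qed

lemma BND:
  assumes A: "finite A" and q: "ismax A f y' q" and \<alpha>: "\<alpha> \<in> A" and \<mu>: "\<mu> \<in> A" "\<mu> \<noteq> \<alpha>"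
    and qa: "0 < q \<alpha>" and z: "y' \<mu> - y' \<alpha> + f' 1 \<le> z"
  shows "q \<mu> \<le> phi f' z"
proof (cases "q \<mu> = 0")
  case True then show ?thesis using phi_nonneg by simp
next
  case False
  have qs: "q \<in> mixed_simplex A" using q by (auto simp: ismax_def)
  have nn: "\<forall>b\<in>A. 0 \<le> q b" using qs by (simp add: mixed_simplex_def)
  have "sum q (A - {\<mu>,\<alpha>}) \<ge> 0" using nn by (intro sum_nonneg) auto
  hence s1: "q \<mu> + q \<alpha> \<le> 1" using sum2[OF A \<mu>(1) \<alpha> \<mu>(2), of q] qs by (simp add: mixed_simplex_def)
  have qm: "q \<mu> \<in> {0<..<1}" using False nn \<mu> s1 qa by force
  show ?thesis
  proof (rule phi_bound[OF qm])
    fix r assume r: "r \<in> {0<..<q \<mu>}"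
    have "y' \<alpha> - y' \<mu> \<le> f' (q \<alpha> + (q \<mu> - r)) - f' (q \<mu> - (q \<mu> - r))"
      using r \<mu> \<alpha> by (intro MEI[OF A q]) auto
    moreover have "f' (q \<alpha> + (q \<mu> - r)) \<le> f' 1" using r qa s1 by (intro mono) auto
    ultimately show "f' r \<le> z" using z by simp
  qed
qed

end

lemma prod_diff:
  fixes a b :: "'i \<Rightarrow> real"
  assumes "finite I" "\<forall>i\<in>I. a i \<in> {0..1} \<and> b i \<in> {0..1}"
  shows "\<bar>prod a I - prod b I\<bar> \<le> (\<Sum>i\<in>I. \<bar>a i - b i\<bar>)"
  using assms
proof (induction I rule: finite_induct)
  case empty then show ?case by simp
next
  case (insert x F)
  let ?P = "prod a F" and ?Q = "prod b F"
  have ab: "a x \<in> {0..1}" "b x \<in> {0..1}" using insert by auto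
  have Q: "0 \<le> ?Q" "?Q \<le> 1" using insert by (auto intro: prod_nonneg prod_le_1)
  have IH: "\<bar>?P - ?Q\<bar> \<le> (\<Sum>i\<in>F. \<bar>a i - b i\<bar>)" using insert by auto
  have "a x * ?P - b x * ?Q = a x * (?P - ?Q) + (a x - b x) * ?Q" by (simp add: algebra_simps)
  hence "\<bar>a x * ?P - b x * ?Q\<bar> \<le> \<bar>a x\<bar> * \<bar>?P - ?Q\<bar> + \<bar>a x - b x\<bar> * \<bar>?Q\<bar>"
    by (metis abs_mult abs_triangle_ineq)
  also have "\<dots> \<le> 1 * \<bar>?P - ?Q\<bar> + \<bar>a x - b x\<bar> * 1"
    using ab Q by (intro add_mono mult_mono) auto
  finally show ?case using insert IH by simp
qed

lemma strat_01: "x \<in> strategies A \<Longrightarrow> finite (A j) \<Longrightarrow> b \<in> A j \<Longrightarrow> 0 \<le> x j b \<and> x j b \<le> 1"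
  by (rule simplex_01) (auto simp: strategies_def)

lemma payv_close:
  fixes A :: "'n::finite \<Rightarrow> 'a set" and \<eta> :: real
  assumes x: "x \<in> strategies A" and x': "x' \<in> strategies A" and fin: "\<And>j. finite (A j)"
    and close: "\<forall>j. \<forall>b\<in>A j. \<bar>x j b - x' j b\<bar> \<le> \<eta>" and eta: "0 \<le> \<eta>"
  shows "\<bar>payv A U k x \<beta> - payv A U k x' \<beta>\<bar> \<le> (\<Sum>a\<in>Pi\<^sub>E UNIV A. \<bar>U k a\<bar>) * (CARD('n) * \<eta>)"
proof -
  let ?X = "x(k := pure \<beta>)" and ?X' = "x'(k := pure \<beta>)"
  have finP: "finite (Pi\<^sub>E UNIV A)" by (intro finite_PiE) (auto simp: fin)
  have pd: "\<bar>(\<Prod>j\<in>UNIV. ?X j (a j)) - (\<Prod>j\<in>UNIV. ?X' j (a j))\<bar> \<le> CARD('n) * \<eta>"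
    if a: "a \<in> Pi\<^sub>E UNIV A" for a
  proof -
    have aj: "a j \<in> A j" for j using a by (auto simp: PiE_iff)
    have "\<bar>(\<Prod>j\<in>UNIV. ?X j (a j)) - (\<Prod>j\<in>UNIV. ?X' j (a j))\<bar> \<le> (\<Sum>j\<in>UNIV. \<bar>?X j (a j) - ?X' j (a j)\<bar>)"
      using strat_01[OF x fin aj] strat_01[OF x' fin aj]
      by (intro prod_diff) (auto simp: pure_def)
    also have "\<dots> \<le> (\<Sum>j\<in>(UNIV::'n set). \<eta>)"
      using close aj eta by (intro sum_mono) auto
    finally show ?thesis by simp
  qed
  have "payv A U k x \<beta> - payv A U k x' \<beta> =
      (\<Sum>a\<in>Pi\<^sub>E UNIV A. ((\<Prod>j\<in>UNIV. ?X j (a j)) - (\<Prod>j\<in>UNIV. ?X' j (a j))) * U k a)"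
    by (simp add: payv_def payoff_def sum_subtractf[symmetric] algebra_simps)
  also have "\<bar>\<dots>\<bar> \<le> (\<Sum>a\<in>Pi\<^sub>E UNIV A. \<bar>((\<Prod>j\<in>UNIV. ?X j (a j)) - (\<Prod>j\<in>UNIV. ?X' j (a j))) * U k a\<bar>)"
    by (rule sum_abs)
  also have "\<dots> \<le> (\<Sum>a\<in>Pi\<^sub>E UNIV A. (CARD('n) * \<eta>) * \<bar>U k a\<bar>)"
    using pd by (intro sum_mono) (auto simp: abs_mult intro: mult_right_mono)
  finally show ?thesis by (simp add: sum_distrib_left sum_distrib_right mult.commute)
qed

lemma first_exit:
  fixes F F' :: "real \<Rightarrow> 'i \<Rightarrow> real" and I :: "'i set"
  assumes I: "finite I"
    and der: "\<And>t i. t \<ge> 0 \<Longrightarrow> i \<in> I \<Longrightarrow> ((\<lambda>s. F s i) has_real_derivative F' t i) (at t within {0..})"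
    and init: "\<And>i. i \<in> I \<Longrightarrow> F 0 i \<le> 0"
    and step: "\<And>t. t \<ge> 0 \<Longrightarrow> (\<forall>i\<in>I. F t i \<le> 0) \<Longrightarrow> \<forall>i\<in>I. F' t i < 0"
  shows "\<forall>t\<ge>0. \<forall>i\<in>I. F t i \<le> 0"
proof (rule ccontr)
  assume nt: "\<not> (\<forall>t\<ge>0. \<forall>i\<in>I. F t i \<le> 0)"
  define S where "S = {t. t \<ge> 0 \<and> (\<exists>i\<in>I. F t i > 0)}"
  have Sne: "S \<noteq> {}" using nt unfolding S_def by (auto simp: not_le) (meson not_le)
  have bdd: "bdd_below S" by (auto simp: S_def bdd_below_def)
  define T where "T = Inf S"
  have T0: "T \<ge> 0" unfolding T_def by (rule cInf_greatest[OF Sne]) (auto simp: S_def)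
  have before: "\<forall>i\<in>I. F t i \<le> 0" if "0 \<le> t" "t < T" for t
  proof (rule ccontr)
    assume "\<not> (\<forall>i\<in>I. F t i \<le> 0)"
    then have "t \<in> S" using that by (auto simp: S_def not_le)
    then have "T \<le> t" unfolding T_def by (rule cInf_lower[OF _ bdd])
    then show False using that by simp
  qed
  have atT: "\<forall>i\<in>I. F T i \<le> 0"
  proof (cases "T = 0")
    case True then show ?thesis using init by auto
  next
    case False
    with T0 have Tp: "T > 0" by simp
    show ?thesis
    proof (rule ccontr)
      assume "\<not> (\<forall>i\<in>I. F T i \<le> 0)"
      then obtain i where i: "i \<in> I" "F T i > 0" by (auto simp: not_le)
      have "continuous (at T within {0..}) (\<lambda>s. F s i)" using der[OF T0 i(1)] by (rule DERIV_continuous)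
      hence "((\<lambda>s. F s i) \<longlongrightarrow> F T i) (at T within {0..})" by (simp add: continuous_within)
      hence "eventually (\<lambda>s. F s i > 0) (at T within {0..})" using i(2) by (rule order_tendstoD)
      then obtain d where d: "d > 0" "\<forall>s\<in>{0..}. s \<noteq> T \<and> dist s T < d \<longrightarrow> F s i > 0"
        by (auto simp: eventually_at)
      define s where "s = max 0 (T - d/2)"
      have "s \<in> {0..}" "s \<noteq> T" "dist s T < d" "s < T" using d Tp by (auto simp: s_def dist_real_def)
      then have "F s i > 0" using d by auto
      moreover have "F s i \<le> 0" using before[of s] \<open>s < T\<close> i by (auto simp: s_def)
      ultimately show False by simp
    qed
  qed
  have neg: "\<forall>i\<in>I. F' T i < 0" using step[OF T0 atT] .
  have ev: "eventually (\<lambda>s. \<forall>i\<in>I. F s i < F T i) (at_right T)"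
  proof (rule eventually_ball_finite[OF I], rule ballI)
    fix i assume i: "i \<in> I"
    have "((\<lambda>s. (F s i - F T i) / (s - T)) \<longlongrightarrow> F' T i) (at T within {0..})"
      using der[OF T0 i] by (simp add: has_field_derivative_iff)
    moreover have "at_right T \<le> at T within {0..}" using T0 by (intro at_le) auto
    ultimately have "((\<lambda>s. (F s i - F T i) / (s - T)) \<longlongrightarrow> F' T i) (at_right T)"
      by (rule tendsto_mono[rotated])
    hence "eventually (\<lambda>s. (F s i - F T i) / (s - T) < 0) (at_right T)"
      using neg i by (intro order_tendstoD) auto
    moreover have "eventually (\<lambda>s. s > T) (at_right T)" by (simp add: eventually_at_right_less)
    ultimately show "eventually (\<lambda>s. F s i < F T i) (at_right T)"
      by eventually_elim (auto simp: divide_less_0_iff)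
  qed
  then obtain b where b: "b > T" "\<forall>s>T. s < b \<longrightarrow> (\<forall>i\<in>I. F s i < F T i)"
    by (auto simp: eventually_at_right_field)
  have "b \<le> T" unfolding T_def
  proof (rule cInf_greatest[OF Sne])
    fix t assume t: "t \<in> S"
    then obtain i where i: "i \<in> I" "F t i > 0" "t \<ge> 0" by (auto simp: S_def)
    show "b \<le> t"
    proof (rule ccontr)
      assume "\<not> b \<le> t"
      then have tb: "t < b" by simp
      have "T \<le> t" using t unfolding T_def by (rule cInf_lower[OF _ bdd])
      show False
      proof (cases "t = T")
        case True then show False using atT i by auto
      next
        case False
        then have "t > T" using \<open>T \<le> t\<close> by simp
        then have "F t i < F T i" using b tb i by auto
        then show False using atT i by auto
      qed
    qed
  qed
  then show False using b by simp
qed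




lemma choice_ismax:
  assumes fin: "finite (A k)" and ne: "A k \<noteq> {}" and K: "kern (\<theta> k) (\<theta>' k)"
    and hd: "\<And>z. z \<in> mixed_simplex (A k) \<Longrightarrow> h k z = (\<Sum>b\<in>A k. \<theta> k (z b))"
  shows "ismax (A k) (\<theta> k) (y k) (choice A h y k)"
proof -
  have eq: "(\<lambda>p. p \<in> mixed_simplex (A k) \<and>
      (\<forall>z\<in>mixed_simplex (A k). (\<Sum>b\<in>A k. y k b * z b) - h k z \<le> (\<Sum>b\<in>A k. y k b * p b) - h k p))
      = ismax (A k) (\<theta> k) (y k)"
    by (rule ext) (auto simp: ismax_def J_def hd)
  have "choice A h y k = (THE p. ismax (A k) (\<theta> k) (y k) p)"
    unfolding choice_def eq by simp
  then show ?thesis using kern.ismax_the[OF K fin ne] by simp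
qed

theorem proposition5p3:
  fixes A :: "'n::finite \<Rightarrow> 'a set"
    and U :: "'n \<Rightarrow> ('n \<Rightarrow> 'a) \<Rightarrow> real"
    and \<theta> \<theta>' :: "'n \<Rightarrow> real \<Rightarrow> real"
    and h :: "'n \<Rightarrow> ('a \<Rightarrow> real) \<Rightarrow> real"
    and \<gamma> :: "'n \<Rightarrow> real"
    and xs :: "'n \<Rightarrow> 'a \<Rightarrow> real"
    and \<alpha>s :: "'n \<Rightarrow> 'a"
  assumes A_fin: "\<And>k. finite (A k)" and A_ne: "\<And>k. A k \<noteq> {}"
    and \<theta>_cont: "\<And>k. continuous_on {0..1} (\<theta> k)"
    and \<theta>_sc: "\<And>k. strongly_convex_on_real {0<..1} (\<theta> k)"
    and \<theta>_deriv: "\<And>k s. s \<in> {0<..1} \<Longrightarrow> (\<theta> k has_real_derivative \<theta>' k s) (at s within {0<..1})"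
    and \<theta>'_cont: "\<And>k. continuous_on {0<..1} (\<theta>' k)"
    and h_dec: "\<And>k z. z \<in> mixed_simplex (A k) \<Longrightarrow> h k z = (\<Sum>b\<in>A k. \<theta> k (z b))"
    and \<gamma>_pos: "\<And>k. \<gamma> k > 0"
    and nash: "strict_nash A U xs"
    and xs_pure: "\<And>k. \<alpha>s k \<in> A k \<and> xs k = pure (\<alpha>s k)"
  shows "\<forall>\<epsilon>>0. \<exists>\<eta>>0. \<exists>c :: ('n \<Rightarrow> 'a \<Rightarrow> real) \<Rightarrow> 'n \<Rightarrow> 'a \<Rightarrow> real.
     \<forall>y :: real \<Rightarrow> 'n \<Rightarrow> 'a \<Rightarrow> real.
       (\<forall>t\<ge>0. \<forall>k. \<forall>b\<in>A k. ((\<lambda>s. y s k b) has_real_derivative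
              \<gamma> k * payv A U k (choice A h (y t)) b) (at t within {0..}))
       \<and> (\<forall>k. \<forall>b\<in>A k. \<bar>choice A h (y 0) k b - xs k b\<bar> < \<eta>)
       \<longrightarrow>
       (\<forall>t\<ge>0. \<forall>k. 1 - choice A h (y t) k (\<alpha>s k) \<le>
          (\<Sum>\<mu>\<in>A k - {\<alpha>s k}. phi (\<theta>' k)
              (c (y 0) k \<mu> - (1 - \<epsilon>) * \<gamma> k *
                 (payv A U k xs (\<alpha>s k) - payv A U k xs \<mu>) * t)))
       \<and> (\<forall>k. dlim0 (\<theta>' k) \<noteq> -\<infinity> \<longrightarrow>
            (\<exists>T\<ge>0. \<forall>t\<ge>T. choice A h (y t) k = xs k))"
proof (intro allI impI)
  fix \<epsilon> :: real assume eps: "\<epsilon> > 0"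
  define \<epsilon>1 where "\<epsilon>1 = min \<epsilon> (1/2)"
  have e1: "0 < \<epsilon>1" "\<epsilon>1 \<le> \<epsilon>" "\<epsilon>1 \<le> 1/2" using eps by (auto simp: \<epsilon>1_def)
  have K: "kern (\<theta> k) (\<theta>' k)" for k
    by unfold_locales (auto intro: \<theta>_cont \<theta>_sc \<theta>_deriv \<theta>'_cont)
  have xs_strat: "xs \<in> strategies A" using nash by (simp add: strict_nash_def)
  have xsk: "xs k = pure (\<alpha>s k)" "\<alpha>s k \<in> A k" for k using xs_pure by auto
  define \<delta> where "\<delta> k \<mu> = payv A U k xs (\<alpha>s k) - payv A U k xs \<mu>" for k \<mu>
  have \<delta>pos: "\<delta> k \<mu> > 0" if "\<mu> \<in> A k - {\<alpha>s k}" for k \<mu>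
  proof -
    have ps: "pure \<mu> \<in> mixed_simplex (A k)" using that A_fin by (intro pure_simplex) auto
    have "pure \<mu> \<noteq> xs k" using that xsk[of k] by (auto simp: pure_def fun_eq_iff)
    then have "payoff A U k xs > payoff A U k (xs(k := pure \<mu>))"
      using nash ps by (auto simp: strict_nash_def)
    moreover have "xs(k := pure (\<alpha>s k)) = xs" using xsk[of k] by auto
    ultimately show ?thesis by (simp add: \<delta>_def payv_def)
  qed
  define IS where "IS = Sigma UNIV (\<lambda>k. A k - {\<alpha>s k})"
  have finIS: "finite IS" unfolding IS_def using A_fin by (intro finite_SigmaI) auto
  define \<delta>m where "\<delta>m = Min (insert 1 ((\<lambda>(k,\<mu>). \<delta> k \<mu>) ` IS))"
  have \<delta>m: "0 < \<delta>m" "\<delta>m \<le> 1" using finIS \<delta>pos by (auto simp: \<delta>m_def IS_def)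
  have \<delta>m_le: "\<delta>m \<le> \<delta> k \<mu>" if "\<mu> \<in> A k - {\<alpha>s k}" for k \<mu>
    using finIS that unfolding \<delta>m_def IS_def by (intro Min_le) force+
  define M where "M = (\<Sum>k\<in>UNIV. \<Sum>a\<in>Pi\<^sub>E UNIV A. \<bar>U k a\<bar>) + 1"
  have M_ge: "(\<Sum>a\<in>Pi\<^sub>E UNIV A. \<bar>U k a\<bar>) \<le> M - 1" for k
  proof -
    have "(\<Sum>a\<in>Pi\<^sub>E UNIV A. \<bar>U k a\<bar>) \<le> (\<Sum>k\<in>UNIV. \<Sum>a\<in>Pi\<^sub>E UNIV A. \<bar>U k a\<bar>)"
      by (rule member_le_sum) (auto intro: sum_nonneg)
    then show ?thesis by (simp add: M_def)
  qed
  have M1: "M \<ge> 1" using M_ge[of undefined] by (smt (verit) sum_nonneg abs_ge_zero)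
  define N where "N = real CARD('n)"
  have N1: "N \<ge> 1" by (simp add: N_def Suc_le_eq)
  define \<eta> where "\<eta> = \<epsilon>1 * \<delta>m / (8 * N * M)"
  have NM: "N * M \<ge> 1" using N1 M1 by (metis mult_mono' mult_1 zero_le_one)
  have eta: "0 < \<eta>" using e1 \<delta>m N1 M1 by (auto simp: \<eta>_def)
  have eta_small: "\<eta> \<le> 1/16"
  proof -
    have "\<epsilon>1 * \<delta>m \<le> 1/2 * 1" using e1 \<delta>m by (intro mult_mono) auto
    moreover have "8 \<le> 8 * N * M" using NM by linarith
    ultimately have "\<epsilon>1 * \<delta>m / (8 * N * M) \<le> (1/2*1) / 8"
      using e1 \<delta>m by (intro frac_le) auto
    then show ?thesis unfolding \<eta>_def by simp
  qed
  have est: "(\<Sum>a\<in>Pi\<^sub>E UNIV A. \<bar>U k a\<bar>) * (N * \<eta>) \<le> \<epsilon>1 * \<delta>m / 8" for k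
  proof -
    have "(\<Sum>a\<in>Pi\<^sub>E UNIV A. \<bar>U k a\<bar>) * (N * \<eta>) \<le> M * (N * \<eta>)"
      using M_ge[of k] eta N1 by (intro mult_right_mono) auto
    also have "\<dots> = \<epsilon>1 * \<delta>m / 8" using N1 M1 by (simp add: \<eta>_def field_simps)
    finally show ?thesis .
  qed
  define c where "c = (\<lambda>(y0::'n \<Rightarrow> 'a \<Rightarrow> real) k \<mu>. y0 k \<mu> - y0 k (\<alpha>s k) + \<theta>' k 1)"
  show "\<exists>\<eta>>0. \<exists>c :: ('n \<Rightarrow> 'a \<Rightarrow> real) \<Rightarrow> 'n \<Rightarrow> 'a \<Rightarrow> real.
     \<forall>y :: real \<Rightarrow> 'n \<Rightarrow> 'a \<Rightarrow> real.
       (\<forall>t\<ge>0. \<forall>k. \<forall>b\<in>A k. ((\<lambda>s. y s k b) has_real_derivative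
              \<gamma> k * payv A U k (choice A h (y t)) b) (at t within {0..}))
       \<and> (\<forall>k. \<forall>b\<in>A k. \<bar>choice A h (y 0) k b - xs k b\<bar> < \<eta>)
       \<longrightarrow>
       (\<forall>t\<ge>0. \<forall>k. 1 - choice A h (y t) k (\<alpha>s k) \<le>
          (\<Sum>\<mu>\<in>A k - {\<alpha>s k}. phi (\<theta>' k)
              (c (y 0) k \<mu> - (1 - \<epsilon>) * \<gamma> k *
                 (payv A U k xs (\<alpha>s k) - payv A U k xs \<mu>) * t)))
       \<and> (\<forall>k. dlim0 (\<theta>' k) \<noteq> -\<infinity> \<longrightarrow>
            (\<exists>T\<ge>0. \<forall>t\<ge>T. choice A h (y t) k = xs k))"
  proof (intro exI[of _ \<eta>] conjI[OF eta] exI[of _ c] allI impI, rule conjI)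
    fix y :: "real \<Rightarrow> 'n \<Rightarrow> 'a \<Rightarrow> real"
    assume hyp: "(\<forall>t\<ge>0. \<forall>k. \<forall>b\<in>A k. ((\<lambda>s. y s k b) has_real_derivative
              \<gamma> k * payv A U k (choice A h (y t)) b) (at t within {0..}))
       \<and> (\<forall>k. \<forall>b\<in>A k. \<bar>choice A h (y 0) k b - xs k b\<bar> < \<eta>)"
    define x where "x t = choice A h (y t)" for t
    have xmax: "ismax (A k) (\<theta> k) (y t k) (x t k)" for t k
      unfolding x_def by (rule choice_ismax[where k=k and A=A and \<theta>=\<theta> and \<theta>'=\<theta>' and h=h, OF A_fin[of k] A_ne[of k] K[of k] h_dec[where k=k]])
    have xsimp: "x t k \<in> mixed_simplex (A k)" for t k using xmax by (simp add: ismax_def)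
    have xstrat: "x t \<in> strategies A" for t using xsimp by (simp add: strategies_def)
    have x01: "0 \<le> x t k b \<and> x t k b \<le> 1" if "b \<in> A k" for t k b
      using simplex_01[OF xsimp A_fin that] .
    have der: "((\<lambda>s. y s k b) has_real_derivative \<gamma> k * payv A U k (x t) b) (at t within {0..})"
      if "t \<ge> 0" "b \<in> A k" for t k b using hyp that by (simp add: x_def)
    have p_close: "1 - x 0 k (\<alpha>s k) < \<eta>" for k
    proof -
      have "\<bar>choice A h (y 0) k (\<alpha>s k) - xs k (\<alpha>s k)\<bar> < \<eta>" using hyp xsk[of k] by blast
      then show ?thesis using xsk[of k] by (simp add: x_def pure_def abs_less_iff)
    qed
    have rest_le: "x t k b \<le> 1 - x t k (\<alpha>s k)" if "b \<in> A k - {\<alpha>s k}" for t k b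
    proof -
      have "sum (x t k) (A k) = x t k (\<alpha>s k) + sum (x t k) (A k - {\<alpha>s k})"
        using A_fin xsk by (simp add: sum.remove)
      moreover have "x t k b \<le> sum (x t k) (A k - {\<alpha>s k})"
        using that A_fin x01 by (intro member_le_sum) auto
      ultimately show ?thesis using xsimp[of t k] by (simp add: mixed_simplex_def)
    qed
    define F where "F t i = (case i of (k,\<mu>) \<Rightarrow> y t k \<mu> - y t k (\<alpha>s k) - (y 0 k \<mu> - y 0 k (\<alpha>s k))
        + (1-\<epsilon>1) * \<gamma> k * \<delta> k \<mu> * t)" for t i
    define F' where "F' t i = (case i of (k,\<mu>) \<Rightarrow> \<gamma> k * payv A U k (x t) \<mu> - \<gamma> k * payv A U k (x t) (\<alpha>s k)
        + (1-\<epsilon>1) * \<gamma> k * \<delta> k \<mu>)" for t i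
    have Fder: "((\<lambda>s. F s i) has_real_derivative F' t i) (at t within {0..})"
      if tt: "t \<ge> 0" and ii: "i \<in> IS" for t i
    proof -
      obtain k \<mu> where i: "i = (k,\<mu>)" "\<mu> \<in> A k" using ii unfolding IS_def by (cases i) auto
      have "((\<lambda>s. y s k \<mu> - y s k (\<alpha>s k) - (y 0 k \<mu> - y 0 k (\<alpha>s k)) + (1-\<epsilon>1) * \<gamma> k * \<delta> k \<mu> * s)
          has_real_derivative (\<gamma> k * payv A U k (x t) \<mu> - \<gamma> k * payv A U k (x t) (\<alpha>s k) - 0
             + (1-\<epsilon>1) * \<gamma> k * \<delta> k \<mu> * 1)) (at t within {0..})"
        by (intro derivative_intros der tt i xsk DERIV_cmult[OF DERIV_ident])
      then show ?thesis by (simp add: F_def F'_def i)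
    qed
    have close: "\<forall>j. \<forall>b\<in>A j. \<bar>x t j b - xs j b\<bar> \<le> \<eta>"
      if t: "t \<ge> 0" and Fle: "\<forall>i\<in>IS. F t i \<le> 0" for t
    proof (intro allI ballI)
      fix j b assume b: "b \<in> A j"
      have hy: "\<forall>\<mu>\<in>A j - {\<alpha>s j}. y t j \<mu> - y t j (\<alpha>s j) \<le> y 0 j \<mu> - y 0 j (\<alpha>s j)"
      proof
        fix \<mu> assume \<mu>: "\<mu> \<in> A j - {\<alpha>s j}"
        have "F t (j,\<mu>) \<le> 0" using Fle \<mu> by (auto simp: IS_def)
        moreover have "(1-\<epsilon>1) * \<gamma> j * \<delta> j \<mu> * t \<ge> 0"
          using e1 \<gamma>_pos[of j] \<delta>pos[OF \<mu>] t by auto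
        ultimately show "y t j \<mu> - y t j (\<alpha>s j) \<le> y 0 j \<mu> - y 0 j (\<alpha>s j)" by (simp add: F_def)
      qed
      have pa: "0 < x 0 j (\<alpha>s j)" using p_close[of j] eta_small by linarith
      have mon: "x 0 j (\<alpha>s j) \<le> x t j (\<alpha>s j)"
        by (rule kern.MON[OF K A_fin xmax xmax xsk(2) pa hy])
      show "\<bar>x t j b - xs j b\<bar> \<le> \<eta>"
      proof (cases "b = \<alpha>s j")
        case True
        then show ?thesis using mon p_close[of j] x01[OF b, of t] xsk[of j] by (simp add: pure_def)
      next
        case False
        then have "x t j b \<le> 1 - x t j (\<alpha>s j)" using b by (intro rest_le) auto
        then show ?thesis using mon p_close[of j] x01[OF b, of t] xsk[of j] False by (simp add: pure_def)
      qed
    qed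
    have step: "\<forall>i\<in>IS. F' t i < 0" if t: "t \<ge> 0" and Fle: "\<forall>i\<in>IS. F t i \<le> 0" for t
    proof
      fix i assume i: "i \<in> IS"
      obtain k \<mu> where ik: "i = (k,\<mu>)" and \<mu>: "\<mu> \<in> A k - {\<alpha>s k}" using i by (auto simp: IS_def)
      have pc: "\<bar>payv A U k (x t) \<beta> - payv A U k xs \<beta>\<bar> \<le> \<epsilon>1 * \<delta>m / 8" for \<beta>
      proof -
        have "\<bar>payv A U k (x t) \<beta> - payv A U k xs \<beta>\<bar> \<le> (\<Sum>a\<in>Pi\<^sub>E UNIV A. \<bar>U k a\<bar>) * (CARD('n) * \<eta>)"
          by (rule payv_close[OF xstrat xs_strat A_fin close[OF t Fle]]) (use eta in simp)
        then show ?thesis using est[of k] by (simp add: N_def)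
      qed
      have "\<epsilon>1 * \<delta>m \<le> \<epsilon>1 * \<delta> k \<mu>" using e1 \<delta>m_le[OF \<mu>] by (intro mult_left_mono) auto
      then have "payv A U k (x t) \<mu> - payv A U k (x t) (\<alpha>s k) + (1-\<epsilon>1) * \<delta> k \<mu> < 0"
      proof -
        have P: "\<epsilon>1 * \<delta>m > 0" using e1 \<delta>m by simp
        have "(1-\<epsilon>1) * \<delta> k \<mu> = \<delta> k \<mu> - \<epsilon>1 * \<delta> k \<mu>" by (simp add: algebra_simps)
        then show ?thesis using pc[of \<mu>] pc[of "\<alpha>s k"] P \<open>\<epsilon>1 * \<delta>m \<le> \<epsilon>1 * \<delta> k \<mu>\<close> unfolding \<delta>_def abs_le_iff
          by linarith
      qed
      then have "\<gamma> k * (payv A U k (x t) \<mu> - payv A U k (x t) (\<alpha>s k) + (1-\<epsilon>1) * \<delta> k \<mu>) < 0"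
        using \<gamma>_pos[of k] by (simp add: mult_pos_neg)
      then show "F' t i < 0" by (simp add: F'_def ik algebra_simps)
    qed
    have Fle: "\<forall>t\<ge>0. \<forall>i\<in>IS. F t i \<le> 0"
      by (rule first_exit[OF finIS Fder _ step]) (auto simp: F_def)
    have xa_pos: "0 < x t k (\<alpha>s k)" if "t \<ge> 0" for t k
    proof -
      have "\<bar>x t k (\<alpha>s k) - xs k (\<alpha>s k)\<bar> \<le> \<eta>" using close[OF that] Fle that xsk by auto
      then show ?thesis using eta_small xsk[of k] by (simp add: pure_def abs_le_iff)
    qed
    have bnd: "x t k \<mu> \<le> phi (\<theta>' k) z"
      if t: "t \<ge> 0" and \<mu>: "\<mu> \<in> A k - {\<alpha>s k}"
        and z: "c (y 0) k \<mu> - (1-\<epsilon>1) * \<gamma> k * \<delta> k \<mu> * t \<le> z" for t k \<mu> z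
    proof (rule kern.BND[OF K A_fin xmax xsk(2)])
      show "\<mu> \<in> A k" "\<mu> \<noteq> \<alpha>s k" using \<mu> by auto
      show "0 < x t k (\<alpha>s k)" by (rule xa_pos[OF t])
      have "F t (k,\<mu>) \<le> 0" using Fle t \<mu> by (auto simp: IS_def)
      then show "y t k \<mu> - y t k (\<alpha>s k) + \<theta>' k 1 \<le> z" using z by (simp add: F_def c_def)
    qed
    show "\<forall>t\<ge>0. \<forall>k. 1 - choice A h (y t) k (\<alpha>s k) \<le>
          (\<Sum>\<mu>\<in>A k - {\<alpha>s k}. phi (\<theta>' k)
              (c (y 0) k \<mu> - (1 - \<epsilon>) * \<gamma> k *
                 (payv A U k xs (\<alpha>s k) - payv A U k xs \<mu>) * t))"
    proof (intro allI impI)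
      fix t k assume t: "(t::real) \<ge> 0"
      have "sum (x t k) (A k) = x t k (\<alpha>s k) + sum (x t k) (A k - {\<alpha>s k})"
        using A_fin xsk by (simp add: sum.remove)
      then have "1 - x t k (\<alpha>s k) = sum (x t k) (A k - {\<alpha>s k})"
        using xsimp[of t k] by (simp add: mixed_simplex_def)
      also have "\<dots> \<le> (\<Sum>\<mu>\<in>A k - {\<alpha>s k}. phi (\<theta>' k) (c (y 0) k \<mu> - (1 - \<epsilon>) * \<gamma> k * \<delta> k \<mu> * t))"
      proof (rule sum_mono)
        fix \<mu> assume \<mu>: "\<mu> \<in> A k - {\<alpha>s k}"
        have "(1 - \<epsilon>) * (\<gamma> k * \<delta> k \<mu> * t) \<le> (1 - \<epsilon>1) * (\<gamma> k * \<delta> k \<mu> * t)"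
          using e1 \<gamma>_pos[of k] \<delta>pos[OF \<mu>] t by (intro mult_right_mono) auto
        then show "x t k \<mu> \<le> phi (\<theta>' k) (c (y 0) k \<mu> - (1 - \<epsilon>) * \<gamma> k * \<delta> k \<mu> * t)"
          by (intro bnd[OF t \<mu>]) (simp add: algebra_simps)
      qed
      finally show "1 - choice A h (y t) k (\<alpha>s k) \<le>
          (\<Sum>\<mu>\<in>A k - {\<alpha>s k}. phi (\<theta>' k)
              (c (y 0) k \<mu> - (1 - \<epsilon>) * \<gamma> k *
                 (payv A U k xs (\<alpha>s k) - payv A U k xs \<mu>) * t))"
        by (simp add: x_def \<delta>_def)
    qed
    show "\<forall>k. dlim0 (\<theta>' k) \<noteq> -\<infinity> \<longrightarrow> (\<exists>T\<ge>0. \<forall>t\<ge>T. choice A h (y t) k = xs k)"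
    proof (intro allI impI)
      fix k assume dl: "dlim0 (\<theta>' k) \<noteq> -\<infinity>"
      obtain z0 where z0: "\<And>z. z \<le> z0 \<Longrightarrow> phi (\<theta>' k) z = 0" using kern.phi_zero[OF K dl] by blast
      have evm: "eventually (\<lambda>t. c (y 0) k \<mu> - (1-\<epsilon>1) * \<gamma> k * \<delta> k \<mu> * t \<le> z0) at_top"
        if \<mu>: "\<mu> \<in> A k - {\<alpha>s k}" for \<mu>
      proof -
        define r where "r = (1-\<epsilon>1) * \<gamma> k * \<delta> k \<mu>"
        have r: "r > 0" using e1 \<gamma>_pos[of k] \<delta>pos[OF \<mu>] by (simp add: r_def)
        show ?thesis unfolding eventually_at_top_linorder r_def[symmetric]
        proof (intro exI[of _ "(c (y 0) k \<mu> - z0) / r"] allI impI)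
          fix t assume "(c (y 0) k \<mu> - z0) / r \<le> t"
          then have "c (y 0) k \<mu> - z0 \<le> t * r" using r by (simp add: divide_le_eq)
          then show "c (y 0) k \<mu> - r * t \<le> z0" by (simp add: algebra_simps)
        qed
      qed
      have "eventually (\<lambda>t. \<forall>\<mu>\<in>A k - {\<alpha>s k}. c (y 0) k \<mu> - (1-\<epsilon>1) * \<gamma> k * \<delta> k \<mu> * t \<le> z0) at_top"
        using A_fin evm by (intro eventually_ball_finite) auto
      then obtain T0 where T0: "\<And>t. t \<ge> T0 \<Longrightarrow> \<forall>\<mu>\<in>A k - {\<alpha>s k}. c (y 0) k \<mu> - (1-\<epsilon>1) * \<gamma> k * \<delta> k \<mu> * t \<le> z0"
        unfolding eventually_at_top_linorder by blast
      show "\<exists>T\<ge>0. \<forall>t\<ge>T. choice A h (y t) k = xs k"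
      proof (intro exI[of _ "max 0 T0"] conjI allI impI)
        fix t assume t: "max 0 T0 \<le> t"
        have zero: "x t k \<mu> = 0" if \<mu>: "\<mu> \<in> A k - {\<alpha>s k}" for \<mu>
        proof -
          have "x t k \<mu> \<le> phi (\<theta>' k) z0" using t T0[of t] \<mu> by (intro bnd) auto
          then show ?thesis using z0[of z0] x01[of \<mu> k t] \<mu> by auto
        qed
        have s1: "x t k (\<alpha>s k) = 1"
        proof -
          have "sum (x t k) (A k) = x t k (\<alpha>s k) + sum (x t k) (A k - {\<alpha>s k})"
            using A_fin xsk by (simp add: sum.remove)
          moreover have "sum (x t k) (A k - {\<alpha>s k}) = 0" using zero by simp
          ultimately show ?thesis using xsimp[of t k] by (simp add: mixed_simplex_def)
        qed
        have "x t k = xs k"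
        proof
          fix b show "x t k b = xs k b"
          proof (cases "b \<in> A k")
            case True then show ?thesis using zero[of b] s1 xsk[of k] by (cases "b = \<alpha>s k") (auto simp: pure_def)
          next
            case False then show ?thesis using xsimp[of t k] xsk[of k] by (auto simp: mixed_simplex_def pure_def)
          qed
        qed
        then show "choice A h (y t) k = xs k" by (simp add: x_def)
      qed simp
    qed
  qed
qed



end
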